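(* Let $R$ be a ring with identity and an involution $*$, and let $a,b,c\in R$. Then: (i) $a$ is left $(b,c)$-invertible if and only if $a^*$ is right $(c^*,b^* )$-invertible; (ii) if $b$ and $c$ are regular, then $a$ is left annihilator $(b,c)$-invertible if and only if $a^*$ is right annihilator $(c^*,b^* )$-invertible.
   Context: An involution is a map $*:R\to R$ with $(x^* )^*=x$, $(xy)^*=y^*x^*$, $(x+y)^*=x^*+y^*$. An element $x$ is regular if $x=xzx$ for some $z\in R$. For $x\in R$: $xR=\{xr:r\in R\}$, $Rx=\{rx:r\in R\}$, $x^\circ=\{r: xr=0\}$, ${}^\circ x=\{r: rx=0\}$. An element $a$ is left $(b,c)$-invertible if there is $y$ with $Ry\subseteq Rc$ and $yab=b$; right $(b,c)$-invertible if there is $y$ with $yR\subseteq bR$ and $cay=c$; right annihilator $(b,c)$-invertible if there is $y$ with $c^\circ\subseteq y^\circ$ and $yab=b$; left annihilator $(b,c)$-invertible if there is $y$ with ${}^\circ b\subseteq {}^\circ y$ and $cay=c$. *)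

theory Defs
  imports Main
begin

definition involution :: "('a::ring_1 \<Rightarrow> 'a) \<Rightarrow> bool" where
  "involution s \<longleftrightarrow> (\<forall>x. s (s x) = x) \<and> (\<forall>x y. s (x * y) = s y * s x)
     \<and> (\<forall>x y. s (x + y) = s x + s y)"

definition regular :: "'a::ring_1 \<Rightarrow> bool" where
  "regular x \<longleftrightarrow> (\<exists>z. x = x * z * x)"

definition rideal :: "'a::ring_1 \<Rightarrow> 'a set" where
  "rideal x = {x * r | r. True}"

definition lideal :: "'a::ring_1 \<Rightarrow> 'a set" where
  "lideal x = {r * x | r. True}"

definition rann :: "'a::ring_1 \<Rightarrow> 'a set" where
  "rann x = {r. x * r = 0}"

definition lann :: "'a::ring_1 \<Rightarrow> 'a set" where
  "lann x = {r. r * x = 0}"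

definition left_bc_inv :: "'a::ring_1 \<Rightarrow> 'a \<Rightarrow> 'a \<Rightarrow> bool" where
  "left_bc_inv a b c \<longleftrightarrow> (\<exists>y. lideal y \<subseteq> lideal c \<and> y * a * b = b)"

definition right_bc_inv :: "'a::ring_1 \<Rightarrow> 'a \<Rightarrow> 'a \<Rightarrow> bool" where
  "right_bc_inv a b c \<longleftrightarrow> (\<exists>y. rideal y \<subseteq> rideal b \<and> c * a * y = c)"

definition right_ann_bc_inv :: "'a::ring_1 \<Rightarrow> 'a \<Rightarrow> 'a \<Rightarrow> bool" where
  "right_ann_bc_inv a b c \<longleftrightarrow> (\<exists>y. rann c \<subseteq> rann y \<and> y * a * b = b)"

definition left_ann_bc_inv :: "'a::ring_1 \<Rightarrow> 'a \<Rightarrow> 'a \<Rightarrow> bool" where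
  "left_ann_bc_inv a b c \<longleftrightarrow> (\<exists>y. lann b \<subseteq> lann y \<and> c * a * y = c)"

end

theory Submission
  imports Defs
begin

lemma inv_props:
  fixes s :: "'a::ring_1 \<Rightarrow> 'a"
  assumes "involution s"
  shows "\<And>x. s (s x) = x" "\<And>x y. s (x * y) = s y * s x" "s 0 = 0"
proof -
  show ss: "\<And>x. s (s x) = x" and m: "\<And>x y. s (x * y) = s y * s x"
    using assms unfolding involution_def by auto
  have ad: "\<And>x y. s (x + y) = s x + s y" using assms unfolding involution_def by auto
  have "s (0 + 0) = s 0 + s 0" by (rule ad)
  then show "s 0 = 0" by simp
qed

lemma lideal_sub: "lideal (y::'a::ring_1) \<subseteq> lideal c \<longleftrightarrow> (\<exists>r. y = r * c)"
proof
  assume "lideal y \<subseteq> lideal c"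
  moreover have "y \<in> lideal y" unfolding lideal_def by (rule CollectI, rule exI[of _ 1]) simp
  ultimately show "\<exists>r. y = r * c" unfolding lideal_def by blast
next
  assume "\<exists>r. y = r * c"
  then obtain r where "y = r * c" by blast
  then show "lideal y \<subseteq> lideal c" unfolding lideal_def
    by (auto simp: mult.assoc[symmetric])
qed

lemma rideal_sub: "rideal (y::'a::ring_1) \<subseteq> rideal c \<longleftrightarrow> (\<exists>r. y = c * r)"
proof
  assume "rideal y \<subseteq> rideal c"
  moreover have "y \<in> rideal y" unfolding rideal_def by (rule CollectI, rule exI[of _ 1]) simp
  ultimately show "\<exists>r. y = c * r" unfolding rideal_def by blast
next
  assume "\<exists>r. y = c * r"
  then obtain r where "y = c * r" by blast
  then show "rideal y \<subseteq> rideal c" unfolding rideal_def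
    by (auto simp: mult.assoc)
qed

theorem proposition2p8:
  fixes s :: "'a::ring_1 \<Rightarrow> 'a" and a b c :: 'a
  assumes "involution s"
  shows "(left_bc_inv a b c \<longleftrightarrow> right_bc_inv (s a) (s c) (s b))
    \<and> (regular b \<and> regular c \<longrightarrow>
         (left_ann_bc_inv a b c \<longleftrightarrow> right_ann_bc_inv (s a) (s c) (s b)))"
proof -
  note ss = inv_props(1)[OF assms] and m = inv_props(2)[OF assms] and z = inv_props(3)[OF assms]
  have i: "left_bc_inv a b c \<longleftrightarrow> right_bc_inv (s a) (s c) (s b)"
  proof
    assume "left_bc_inv a b c"
    then obtain y r where h: "y = r * c" "y * a * b = b"
      unfolding left_bc_inv_def lideal_sub by blast
    have "s (y * a * b) = s b" using h(2) by simp
    then have "s y = s c * s r" "s b * s a * s y = s b"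
      using h(1) by (auto simp: m mult.assoc)
    then show "right_bc_inv (s a) (s c) (s b)"
      unfolding right_bc_inv_def rideal_sub by blast
  next
    assume "right_bc_inv (s a) (s c) (s b)"
    then obtain y r where h: "y = s c * r" "s b * s a * y = s b"
      unfolding right_bc_inv_def rideal_sub by blast
    have "s (s b * s a * y) = s (s b)" using h(2) by simp
    then have "s y = s r * c" "s y * a * b = b"
      using h(1) by (auto simp: m ss mult.assoc)
    then show "left_bc_inv a b c"
      unfolding left_bc_inv_def lideal_sub by blast
  qed
  have key: "\<And>y. rann (s b) \<subseteq> rann (s y) \<longleftrightarrow> lann b \<subseteq> lann y"
  proof -
    fix y
    have "rann (s b) \<subseteq> rann (s y) \<longleftrightarrow> (\<forall>r. s b * r = 0 \<longrightarrow> s y * r = 0)"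
      unfolding rann_def by auto
    also have "\<dots> \<longleftrightarrow> (\<forall>r. s b * s r = 0 \<longrightarrow> s y * s r = 0)"
    proof
      assume h: "\<forall>r. s b * r = 0 \<longrightarrow> s y * r = 0"
      show "\<forall>r. s b * s r = 0 \<longrightarrow> s y * s r = 0" using h by blast
    next
      assume h: "\<forall>r. s b * s r = 0 \<longrightarrow> s y * s r = 0"
      show "\<forall>r. s b * r = 0 \<longrightarrow> s y * r = 0"
      proof (intro allI impI)
        fix r assume "s b * r = 0"
        then have "s b * s (s r) = 0" by (simp add: ss)
        then have "s y * s (s r) = 0" using h by blast
        then show "s y * r = 0" by (simp add: ss)
      qed
    qed
    also have "\<dots> \<longleftrightarrow> (\<forall>r. r * b = 0 \<longrightarrow> r * y = 0)"
    proof -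
      have e: "\<And>u v. u * v = 0 \<longleftrightarrow> s v * s u = 0"
      proof -
        fix u v
        have "u * v = 0 \<longleftrightarrow> s (u * v) = s 0"
          by (metis ss)
        then show "u * v = 0 \<longleftrightarrow> s v * s u = 0" by (simp add: m z)
      qed
      show ?thesis by (simp add: e[of "s b"] e[of "s y"] ss)
    qed
    finally show "?thesis y" unfolding lann_def by auto
  qed
  have ii: "left_ann_bc_inv a b c \<longleftrightarrow> right_ann_bc_inv (s a) (s c) (s b)"
  proof
    assume "left_ann_bc_inv a b c"
    then obtain y where h: "lann b \<subseteq> lann y" "c * a * y = c"
      unfolding left_ann_bc_inv_def by blast
    have "s (c * a * y) = s c" using h(2) by simp
    then have "rann (s b) \<subseteq> rann (s y)" "s y * s a * s c = s c"
      using key h(1) by (auto simp: m mult.assoc)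
    then show "right_ann_bc_inv (s a) (s c) (s b)"
      unfolding right_ann_bc_inv_def by blast
  next
    assume "right_ann_bc_inv (s a) (s c) (s b)"
    then obtain w where w: "rann (s b) \<subseteq> rann w" "w * s a * s c = s c"
      unfolding right_ann_bc_inv_def by blast
    define y where "y = s w"
    have "w = s y" using ss y_def by simp
    with w have "rann (s b) \<subseteq> rann (s y)" "s (s y * s a * s c) = s (s c)" by auto
    then have "lann b \<subseteq> lann y" "c * a * y = c"
      using key by (auto simp: m ss mult.assoc)
    then show "left_ann_bc_inv a b c"
      unfolding left_ann_bc_inv_def by blast
  qed
  show ?thesis using i ii by blast
qed

end
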